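(* Let $N\ge 1$ users and a server run the LightSecAgg protocol described in the context, with integer parameters $T\ge 0$ (privacy guarantee) and $D\ge 0$ (dropout-resiliency guarantee) satisfying $T+D<N$, and with the design parameter $U$ being any integer with $T<U\le N-D$. Then LightSecAgg simultaneously achieves (1) privacy against any set of up to $T$ colluding users (who may also collude with the server), and (2) dropout-resiliency against any set of up to $D$ dropped users, in the sense defined in the context.
   Context: Setting: there are $N$ users, indexed by $[N]=\{1,\dots,N\}$, and a server. User $i$ holds a local model $\mathbf{x}_i\in\mathbb{F}_q^d$ for a finite field $\mathbb{F}_q$; the $\mathbf{x}_i$ are independent of all randomness generated by the protocol. Users communicate with each other through private, authenticated channels (the server does not see user-to-user messages). Assume $U-T$ divides $d$. A matrix $W\in\mathbb{F}_q^{U\times N}$ is MDS if every $U\times U$ submatrix is invertible; it is $T$-private MDS if in addition the submatrix consisting of its rows $U-T+1,\dots,U$ is MDS (every $T\times T$ submatrix of it is invertible). Such matrices exist for all $U,N,T$ (for $q$ large enough). Let $W_j$ denote the $j$-th column of a fixed $T$-private MDS matrix $W$. LightSecAgg protocol with parameters $T,D,U$ ($N-D\ge U>T\ge0$): (i) Offline encoding and sharing of masks: each user $i$ independently picks $\mathbf{z}_i$ uniformly at random from $\mathbb{F}_q^d$, partitions it into $U-T$ sub-masks $[\mathbf{z}_i]_1,\dots,[\mathbf{z}_i]_{U-T}\in\mathbb{F}_q^{d/(U-T)}$, picks $[\mathbf{n}_i]_{U-T+1},\dots,[\mathbf{n}_i]_U$ independently and uniformly at random from $\mathbb{F}_q^{d/(U-T)}$,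 and computes for each $j\in[N]$ the encoded mask $[\tilde{\mathbf{z}}_i]_j=([\mathbf{z}_i]_1,\dots,[\mathbf{z}_i]_{U-T},[\mathbf{n}_i]_{U-T+1},\dots,[\mathbf{n}_i]_U)\cdot W_j$ (each coordinate of the vectors combined linearly with the entries of $W_j$). User $i$ sends $[\tilde{\mathbf{z}}_i]_j$ to user $j$ for each $j\ne i$. (ii) Masking and uploading: each user $i$ sends $\tilde{\mathbf{x}}_i=\mathbf{x}_i+\mathbf{z}_i$ to the server. The server identifies the set $\mathcal{U}_1\subseteq[N]$ of users whose masked models it received (surviving users). (iii) One-shot aggregate-model recovery: each surviving user $j\in\mathcal{U}_1$ sends $\sum_{i\in\mathcal{U}_1}[\tilde{\mathbf{z}}_i]_j$ to the server; after receiving any $U$ of these messages, the server decodes (using $W$) $\sum_{i\in\mathcal{U}_1}[\mathbf{z}_i]_k$ for $k\in[U-T]$, concatenates them into $\sum_{i\in\mathcal{U}_1}\mathbf{z}_i$, and outputs $\sum_{i\in\mathcal{U}_1}\tilde{\mathbf{x}}_i-\sum_{i\in\mathcal{U}_1}\mathbf{z}_i$. Privacy guarantee $T$: for every set $\mathcal{T}\subseteq[N]$ with $|\mathcal{T}|\le T$, $I\big(\{\mathbf{x}_i\}_{i\in[N]};\mathbf{Y}\,\big|\,\sum_{i\in\mathcal{U}_1}\mathbf{x}_i,\mathbf{Z}_{\mathcal{T}}\big)=0$, where $\mathbf{Y}$ is the collection of all messages received by the server (in the worst case where users deemed dropped are merely delayed, so the server receives all masked models), and $\mathbf{Z}_{\mathcal{T}}$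 is the collection of all information held by the users in $\mathcal{T}$ (their models, masks and received encoded masks). Dropout-resiliency guarantee $D$: if at most $D$ users drop at any point during execution, the server correctly recovers $\sum_{i\in\mathcal{U}_1}\mathbf{x}_i$, the sum of the surviving users' models. *)

theory Defs
  imports "Jordan_Normal_Form.DL_Submatrix" "HOL-Probability.Probability_Mass_Function"
          "HOL-Library.FuncSet"
begin

text \<open>Conventions (0-based indexing): users are 0..N-1, rows of W are 0..U-1,
  the "noise" rows of the paper (U-T+1..U) are U-T..U-1, vector coordinates of
  F_q^d are 0..d-1, and sub-mask k (paper: k+1) of z occupies coordinates
  k*m .. k*m+m-1 with m = d div (U-T).\<close>

definition MDS_mat :: "'a::field mat \<Rightarrow> nat \<Rightarrow> nat \<Rightarrow> bool" where
  "MDS_mat W U N \<longleftrightarrow> W \<in> carrier_mat U N \<and>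
     (\<forall>S. S \<subseteq> {..<N} \<longrightarrow> card S = U \<longrightarrow> invertible_mat (submatrix W {..<U} S))"

definition T_private_MDS :: "'a::field mat \<Rightarrow> nat \<Rightarrow> nat \<Rightarrow> nat \<Rightarrow> bool" where
  "T_private_MDS W U N T \<longleftrightarrow> MDS_mat W U N \<and> T \<le> U \<and>
     (\<forall>S. S \<subseteq> {..<N} \<longrightarrow> card S = T \<longrightarrow> invertible_mat (submatrix W {U-T..<U} S))"

definition cond_mutual_info ::
  "'o pmf \<Rightarrow> ('o \<Rightarrow> 'x) \<Rightarrow> ('o \<Rightarrow> 'y) \<Rightarrow> ('o \<Rightarrow> 'z) \<Rightarrow> real" where
  "cond_mutual_info M X Y Z =
     (\<Sum>(x,y,z) \<in> (\<lambda>\<omega>. (X \<omega>, Y \<omega>, Z \<omega>)) ` set_pmf M.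
        let pxyz = pmf (map_pmf (\<lambda>\<omega>. (X \<omega>, Y \<omega>, Z \<omega>)) M) (x,y,z);
            pz   = pmf (map_pmf Z M) z;
            pxz  = pmf (map_pmf (\<lambda>\<omega>. (X \<omega>, Z \<omega>)) M) (x,z);
            pyz  = pmf (map_pmf (\<lambda>\<omega>. (Y \<omega>, Z \<omega>)) M) (y,z)
        in pxyz * log 2 ((pxyz * pz) / (pxz * pyz)))"

type_synonym 'a fvec = "nat \<Rightarrow> 'a"          \<comment> \<open>vector, meaningful coordinates < length\<close>

definition fvecs :: "nat \<Rightarrow> 'a fvec set" where
  "fvecs n = PiE {..<n} (\<lambda>_. UNIV)"

definition sublen :: "nat \<Rightarrow> nat \<Rightarrow> nat \<Rightarrow> nat" where
  "sublen d U T = d div (U - T)"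

text \<open>Coefficient vector ([z]_1,...,[z]_{U-T},[n]_{U-T+1},...,[n]_U), as a function of
  block index k < U and in-block coordinate l < m.\<close>
definition coeff :: "nat \<Rightarrow> nat \<Rightarrow> nat \<Rightarrow> 'a fvec \<Rightarrow> (nat \<Rightarrow> 'a fvec) \<Rightarrow> nat \<Rightarrow> nat \<Rightarrow> 'a" where
  "coeff d U T z n k l = (if k < U - T then z (k * sublen d U T + l) else n k l)"

text \<open>Encoded mask [z~_i]_j of a user with mask z and noise n, sent to user j.\<close>
definition enc_mask ::
  "'a::field mat \<Rightarrow> nat \<Rightarrow> nat \<Rightarrow> nat \<Rightarrow> 'a fvec \<Rightarrow> (nat \<Rightarrow> 'a fvec) \<Rightarrow> nat \<Rightarrow> 'a fvec" where
  "enc_mask W d U T z n j = (\<lambda>l\<in>{..<sublen d U T}. \<Sum>k<U. coeff d U T z n k l * W $$ (k, j))"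

definition masks_space :: "nat \<Rightarrow> nat \<Rightarrow> ('a fvec) fvec set" where
  "masks_space N d = PiE {..<N} (\<lambda>_. fvecs d)"

definition noise_space :: "nat \<Rightarrow> nat \<Rightarrow> nat \<Rightarrow> nat \<Rightarrow> (nat \<Rightarrow> nat \<Rightarrow> 'a fvec) set" where
  "noise_space N d U T = PiE {..<N} (\<lambda>_. PiE {U-T..<U} (\<lambda>_. fvecs (sublen d U T)))"

definition rand_pmf :: "nat \<Rightarrow> nat \<Rightarrow> nat \<Rightarrow> nat \<Rightarrow>
    (('a::finite) fvec fvec \<times> (nat \<Rightarrow> nat \<Rightarrow> 'a fvec)) pmf" where
  "rand_pmf N d U T = pair_pmf (pmf_of_set (masks_space N d)) (pmf_of_set (noise_space N d U T))"

text \<open>Message of phase (iii) from surviving user j: sum over i \<in> U1 of [z~_i]_j.\<close>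
definition agg_msg ::
  "'a::field mat \<Rightarrow> nat \<Rightarrow> nat \<Rightarrow> nat \<Rightarrow> nat set \<Rightarrow> 'a fvec fvec \<Rightarrow> (nat \<Rightarrow> nat \<Rightarrow> 'a fvec)
     \<Rightarrow> nat \<Rightarrow> 'a fvec" where
  "agg_msg W d U T U1 zs ns j =
     (\<lambda>l\<in>{..<sublen d U T}. \<Sum>i\<in>U1. enc_mask W d U T (zs i) (ns i) j l)"

definition decode :: "'a::field mat \<Rightarrow> nat \<Rightarrow> nat set \<Rightarrow> (nat \<Rightarrow> 'a fvec) \<Rightarrow> nat \<Rightarrow> nat \<Rightarrow> 'a" where
  "decode W U S y k l =
     (THE v. \<exists>s::nat \<Rightarrow> 'a. (\<forall>j\<in>S. (\<Sum>k'<U. s k' * W $$ (k', j)) = y j l) \<and> s k = v)"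

text \<open>Server output, given surviving set U1 and the set S of U users whose
  phase-(iii) messages it uses: sum of masked models minus decoded aggregate mask.\<close>
definition server_output ::
  "'a::field mat \<Rightarrow> nat \<Rightarrow> nat \<Rightarrow> nat \<Rightarrow> nat set \<Rightarrow> nat set \<Rightarrow> 'a fvec fvec
     \<Rightarrow> 'a fvec fvec \<Rightarrow> (nat \<Rightarrow> nat \<Rightarrow> 'a fvec) \<Rightarrow> 'a fvec" where
  "server_output W d U T U1 S xs zs ns =
     (\<lambda>p\<in>{..<d}. (\<Sum>i\<in>U1. xs i p + zs i p)
        - decode W U S (agg_msg W d U T U1 zs ns) (p div sublen d U T) (p mod sublen d U T))"

text \<open>Everything the server receives: all masked models (worst case) and the
  phase-(iii) messages of all surviving users.\<close>
definition server_view ::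
  "'a::field mat \<Rightarrow> nat \<Rightarrow> nat \<Rightarrow> nat \<Rightarrow> nat \<Rightarrow> nat set \<Rightarrow>
     'a fvec fvec \<times> ('a fvec fvec \<times> (nat \<Rightarrow> nat \<Rightarrow> 'a fvec)) \<Rightarrow> 'a fvec fvec \<times> 'a fvec fvec" where
  "server_view W N d U T U1 = (\<lambda>(xs, zs, ns).
     ((\<lambda>i\<in>{..<N}. \<lambda>p\<in>{..<d}. xs i p + zs i p),
      (\<lambda>j\<in>U1. agg_msg W d U T U1 zs ns j)))"

definition colluders_view ::
  "'a::field mat \<Rightarrow> nat \<Rightarrow> nat \<Rightarrow> nat \<Rightarrow> nat \<Rightarrow> nat set \<Rightarrow>
     'a fvec fvec \<times> ('a fvec fvec \<times> (nat \<Rightarrow> nat \<Rightarrow> 'a fvec)) \<Rightarrow>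
     nat \<Rightarrow> 'a fvec \<times> 'a fvec \<times> (nat \<Rightarrow> 'a fvec) \<times> 'a fvec fvec" where
  "colluders_view W N d U T Tc = (\<lambda>(xs, zs, ns).
     (\<lambda>t\<in>Tc. (xs t, zs t, ns t,
               (\<lambda>i\<in>{..<N} - {t}. enc_mask W d U T (zs i) (ns i) t))))"

text \<open>Privacy guarantee T: for every distribution of the models (independent of the
  protocol randomness), every set U1 of surviving users and every set Tc of at most
  T colluding users, I(models; server view | sum of surviving models, Z_Tc) = 0.\<close>
definition lightsecagg_private :: "'a::{field,finite} mat \<Rightarrow> nat \<Rightarrow> nat \<Rightarrow> nat \<Rightarrow> nat \<Rightarrow> bool" where
  "lightsecagg_private W N d U T \<longleftrightarrow>
     (\<forall>PX :: 'a fvec fvec pmf. \<forall>U1 Tc.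
        set_pmf PX \<subseteq> PiE {..<N} (\<lambda>_. fvecs d) \<longrightarrow>
        U1 \<subseteq> {..<N} \<longrightarrow> Tc \<subseteq> {..<N} \<longrightarrow> card Tc \<le> T \<longrightarrow>
        cond_mutual_info (pair_pmf PX (rand_pmf N d U T))
          (\<lambda>\<omega>. fst \<omega>)
          (server_view W N d U T U1)
          (\<lambda>\<omega>. ((\<lambda>p\<in>{..<d}. \<Sum>i\<in>U1. fst \<omega> i p), colluders_view W N d U T Tc \<omega>)) = 0)"

text \<open>Dropout-resiliency guarantee D: for all models and all choices of randomness,
  if U1 is the set of users whose masked models arrive and U2 \<subseteq> U1 the set of users
  that send their phase-(iii) message, with at most D users dropped overall,
  then the server receives at least U messages, and decoding from ANY U received
  messages yields the sum of the surviving users' models.\<close>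
definition lightsecagg_dropout_resilient ::
  "'a::field mat \<Rightarrow> nat \<Rightarrow> nat \<Rightarrow> nat \<Rightarrow> nat \<Rightarrow> nat \<Rightarrow> bool" where
  "lightsecagg_dropout_resilient W N d U T D \<longleftrightarrow>
     (\<forall>xs zs ns U1 U2.
        xs \<in> PiE {..<N} (\<lambda>_. fvecs d) \<longrightarrow> zs \<in> masks_space N d \<longrightarrow>
        ns \<in> noise_space N d U T \<longrightarrow>
        U2 \<subseteq> U1 \<longrightarrow> U1 \<subseteq> {..<N} \<longrightarrow> card ({..<N} - U2) \<le> D \<longrightarrow>
        (\<exists>S. S \<subseteq> U2 \<and> card S = U) \<and>
        (\<forall>S. S \<subseteq> U2 \<longrightarrow> card S = U \<longrightarrow>
           server_output W d U T U1 S xs zs ns = (\<lambda>p\<in>{..<d}. \<Sum>i\<in>U1. xs i p)))"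

end

theory Submission
  imports Defs
begin

lemma inv_row_zero:
  fixes B :: "'a::field mat"
  assumes B: "B \<in> carrier_mat n n" and inv: "invertible_mat B"
    and z: "\<forall>j<n. (\<Sum>i<n. v i * B $$ (i,j)) = 0" and k: "k < n"
  shows "v k = 0"
proof -
  obtain B' where i1: "B * B' = 1\<^sub>m n" and i2: "B' * B = 1\<^sub>m (dim_row B')"
    using inv B unfolding invertible_mat_def inverts_mat_def by auto
  have dc: "dim_col B' = n" using i1 B by (metis index_mult_mat(3) index_one_mat(3))
  have dr: "dim_row B' = n" using i2 B by (metis index_mult_mat(3) index_one_mat(3) carrier_matD(2))
  have "v k = (\<Sum>i<n. v i * (B * B') $$ (i,k))"
    using k by (simp add: i1 if_distrib cong: if_cong)
  also have "\<dots> = (\<Sum>i<n. v i * (\<Sum>j<n. B $$ (i,j) * B' $$ (j,k)))"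
    apply (rule sum.cong[OF refl])
    using B dc dr k by (auto simp: scalar_prod_def lessThan_atLeast0)
  also have "\<dots> = (\<Sum>j<n. (\<Sum>i<n. v i * B $$ (i,j)) * B' $$ (j,k))"
    by (simp add: sum_distrib_left sum_distrib_right mult.assoc) (rule sum.swap)
  also have "\<dots> = 0" using z by simp
  finally show ?thesis .
qed

lemma pick_bij:
  assumes "finite R" shows "bij_betw (pick R) {..<card R} R"
proof -
  have inj: "inj_on (pick R) {..<card R}"
    by (rule inj_onI) (metis lessThan_iff linorder_neqE_nat pick_mono less_irrefl)
  have sub: "pick R ` {..<card R} \<subseteq> R" using pick_in_set by auto
  have "card (pick R ` {..<card R}) = card R" using card_image[OF inj] by simp
  then have "pick R ` {..<card R} = R" using card_subset_eq[OF assms sub] by simp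
  then show ?thesis using inj unfolding bij_betw_def by simp
qed

lemma sub_zero:
  fixes W :: "'a::field mat"
  assumes W: "W \<in> carrier_mat U N" and R: "R \<subseteq> {..<U}" and S: "S \<subseteq> {..<N}"
    and c: "card R = card S" and inv: "invertible_mat (submatrix W R S)"
    and z: "\<forall>j\<in>S. (\<Sum>k\<in>R. s k * W $$ (k,j)) = 0" and k: "k \<in> R"
  shows "s k = 0"
proof -
  define n where "n = card R"
  have fR: "finite R" using R finite_subset by blast
  have fS: "finite S" using S finite_subset by blast
  have e1: "{i. i < dim_row W \<and> i \<in> R} = R" using W R by auto
  have e2: "{i. i < dim_col W \<and> i \<in> S} = S" using W S by auto
  have Bc: "submatrix W R S \<in> carrier_mat n n"
    unfolding carrier_mat_def n_def using c by (simp add: dim_submatrix e1 e2)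
  have idx: "submatrix W R S $$ (i,j) = W $$ (pick R i, pick S j)" if "i < n" "j < n" for i j
    using submatrix_index[of i W R j S] that unfolding e1 e2 n_def using c by simp
  have "\<forall>j<n. (\<Sum>i<n. s (pick R i) * submatrix W R S $$ (i,j)) = 0"
  proof (intro allI impI)
    fix j assume j: "j < n"
    have "(\<Sum>i<n. s (pick R i) * submatrix W R S $$ (i,j)) = (\<Sum>i<n. s (pick R i) * W $$ (pick R i, pick S j))"
      using idx j by simp
    also have "\<dots> = (\<Sum>k\<in>R. s k * W $$ (k, pick S j))"
      using sum.reindex_bij_betw[OF pick_bij[OF fR], of "\<lambda>k. s k * W $$ (k, pick S j)"] n_def by simp
    also have "\<dots> = 0" using z pick_in_set[of j S] j c n_def by simp
    finally show "(\<Sum>i<n. s (pick R i) * submatrix W R S $$ (i,j)) = 0" .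
  qed
  moreover have "card {a\<in>R. a < k} < n"
    unfolding n_def using k fR by (intro psubset_card_mono) auto
  ultimately have "s (pick R (card {a\<in>R. a < k})) = 0"
    using inv_row_zero[OF Bc inv, of "\<lambda>i. s (pick R i)"] by blast
  then show ?thesis using pick_card_in_set[OF k] by simp
qed

lemma decode_eq:
  fixes W :: "'a::field mat"
  assumes W: "W \<in> carrier_mat U N" and S: "S \<subseteq> {..<N}" and c: "card S = U"
    and inv: "invertible_mat (submatrix W {..<U} S)"
    and s0: "\<forall>j\<in>S. (\<Sum>k'<U. s0 k' * W $$ (k', j)) = y j l" and k: "k < U"
  shows "decode W U S y k l = s0 k"
  unfolding decode_def
proof (rule the_equality)
  show "\<exists>s. (\<forall>j\<in>S. (\<Sum>k'<U. s k' * W $$ (k', j)) = y j l) \<and> s k = s0 k"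
    using s0 by blast
next
  fix v assume "\<exists>s. (\<forall>j\<in>S. (\<Sum>k'<U. s k' * W $$ (k', j)) = y j l) \<and> s k = v"
  then obtain s where s: "\<forall>j\<in>S. (\<Sum>k'<U. s k' * W $$ (k', j)) = y j l" and v: "s k = v" by blast
  have "\<forall>j\<in>S. (\<Sum>k'\<in>{..<U}. (s k' - s0 k') * W $$ (k', j)) = 0"
    using s s0 by (simp add: left_diff_distrib sum_subtractf)
  then have "s k - s0 k = 0"
    using sub_zero[OF W _ S _ inv, of "\<lambda>k'. s k' - s0 k'" k] k c by simp
  then show "v = s0 k" using v by simp
qed

lemma dropout:
  fixes W :: "'a::field mat"
  assumes "T < U" and "U \<le> N - D" and dv: "(U - T) dvd d" and mds: "T_private_MDS W U N T"
  shows "lightsecagg_dropout_resilient W N d U T D"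
  unfolding lightsecagg_dropout_resilient_def
proof (intro allI impI, rule conjI)
  fix xs zs :: "nat \<Rightarrow> 'a fvec" and ns :: "nat \<Rightarrow> nat \<Rightarrow> 'a fvec" and U1 U2 :: "nat set"
  assume "xs \<in> PiE {..<N} (\<lambda>_. fvecs d)" "zs \<in> masks_space N d" "ns \<in> noise_space N d U T"
  assume U21: "U2 \<subseteq> U1" and U1: "U1 \<subseteq> {..<N}" and cd: "card ({..<N} - U2) \<le> D"
  have "card ({..<N} - U2) = N - card U2" using U21 U1 by (subst card_Diff_subset) (auto intro: finite_subset)
  then have "U \<le> card U2" using cd assms by linarith
  then obtain S where "S \<subseteq> U2" "card S = U" using obtain_subset_with_card_n by metis
  then show "\<exists>S. S \<subseteq> U2 \<and> card S = U" by blast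
  have W: "W \<in> carrier_mat U N" and mdsS: "\<And>S. S \<subseteq> {..<N} \<Longrightarrow> card S = U \<Longrightarrow> invertible_mat (submatrix W {..<U} S)"
    using mds unfolding T_private_MDS_def MDS_mat_def by auto
  show "\<forall>S. S \<subseteq> U2 \<longrightarrow> card S = U \<longrightarrow>
           server_output W d U T U1 S xs zs ns = (\<lambda>p\<in>{..<d}. \<Sum>i\<in>U1. xs i p)"
  proof (intro allI impI)
    fix S assume SU: "S \<subseteq> U2" and cS: "card S = U"
    have S: "S \<subseteq> {..<N}" using SU U21 U1 by blast
    define m where "m = sublen d U T"
    have dm: "d = m * (U - T)" using dv unfolding m_def sublen_def by simp
    have "server_output W d U T U1 S xs zs ns p = (\<lambda>p\<in>{..<d}. \<Sum>i\<in>U1. xs i p) p" for p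
      proof (cases "p < d")
        case False then show ?thesis by (simp add: server_output_def)
      next
        case True
        have m0: "0 < m" using True dm by (cases m) auto
        have l: "p mod m < m" using m0 by simp
        have kk: "p div m < U - T" using True dm less_mult_imp_div_less[of p "U - T" m] by (simp add: mult.commute)
        define s0 where "s0 = (\<lambda>k'. \<Sum>i\<in>U1. coeff d U T (zs i) (ns i) k' (p mod m))"
        have "\<forall>j\<in>S. (\<Sum>k'<U. s0 k' * W $$ (k', j)) = agg_msg W d U T U1 zs ns j (p mod m)"
          unfolding agg_msg_def enc_mask_def s0_def using l m_def
          by (simp add: sum_distrib_right sum.swap[of _ U1])
        then have "decode W U S (agg_msg W d U T U1 zs ns) (p div m) (p mod m) = s0 (p div m)"
          using decode_eq[OF W S cS mdsS[OF S cS]] kk by simp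
        also have "\<dots> = (\<Sum>i\<in>U1. zs i p)"
          unfolding s0_def coeff_def using kk m_def by simp
        finally show ?thesis using True m_def by (simp add: sum.distrib server_output_def)
      qed
    then show "server_output W d U T U1 S xs zs ns = (\<lambda>p\<in>{..<d}. \<Sum>i\<in>U1. xs i p)" by (rule ext)
  qed
qed


lemma map_pair_bind: "map_pmf f (pair_pmf PX R) = bind_pmf PX (\<lambda>x. map_pmf (\<lambda>r. f (x,r)) R)"
  by (simp add: pair_pmf_def map_bind_pmf bind_return_pmf map_pmf_def bind_assoc_pmf)

lemma pmf_map_pair:
  assumes "finite (set_pmf PX)"
  shows "pmf (map_pmf f (pair_pmf PX R)) a = (\<Sum>x\<in>set_pmf PX. pmf PX x * pmf (map_pmf (\<lambda>r. f (x,r)) R) a)"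
  unfolding map_pair_bind pmf_bind
  by (subst integral_measure_pmf[OF assms]) (auto simp: mult.commute)

lemma pmf_map_Pair_pt:
  "pmf (map_pmf (\<lambda>r. (x', F r)) R) (x, b) = (if x' = x then pmf (map_pmf F R) b else 0)"
proof -
  have e: "map_pmf (\<lambda>r. (x', F r)) R = map_pmf (Pair x') (map_pmf F R)" by (simp add: pmf.map_comp o_def)
  show ?thesis
  proof (cases "x' = x")
    case True
    then show ?thesis unfolding e by (simp add: pmf_map_inj' inj_on_def)
  next
    case False
    then show ?thesis by (auto simp: pmf_eq_0_set_pmf)
  qed
qed

lemma cmi_zero:
  fixes PX :: "'x pmf" and R :: "'r pmf" and Y :: "'x \<times> 'r \<Rightarrow> 'y" and Z :: "'x \<times> 'r \<Rightarrow> 'z"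
    and g :: "'x \<Rightarrow> 'g" and h :: "'z \<Rightarrow> 'g"
  assumes fX: "finite (set_pmf PX)"
    and hz: "\<And>x r. x \<in> set_pmf PX \<Longrightarrow> h (Z (x,r)) = g x"
    and K: "\<And>x x'. x \<in> set_pmf PX \<Longrightarrow> x' \<in> set_pmf PX \<Longrightarrow> g x = g x' \<Longrightarrow>
        map_pmf (\<lambda>r. (Y (x,r), Z (x,r))) R = map_pmf (\<lambda>r. (Y (x',r), Z (x',r))) R"
  shows "cond_mutual_info (pair_pmf PX R) (\<lambda>\<omega>. fst \<omega>) Y Z = 0"
  unfolding cond_mutual_info_def
proof (rule sum.neutral, rule ballI)
  let ?M = "pair_pmf PX R"
  fix t assume "t \<in> (\<lambda>\<omega>. (fst \<omega>, Y \<omega>, Z \<omega>)) ` set_pmf ?M"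
  then obtain x r where x: "x \<in> set_pmf PX" and r: "r \<in> set_pmf R" and t: "t = (x, Y (x,r), Z (x,r))"
    by (auto simp: set_pair_pmf)
  define y where "y = Y (x,r)"
  define z where "z = Z (x,r)"
  define A where "A = (\<lambda>x'. pmf (map_pmf (\<lambda>r. (Y (x',r), Z (x',r))) R) (y,z))"
  define B where "B = (\<lambda>x'. pmf (map_pmf (\<lambda>r. Z (x',r)) R) z)"
  define PG where "PG = (\<Sum>x'\<in>set_pmf PX. if g x' = g x then pmf PX x' else 0)"
  have Bm: "map_pmf (\<lambda>r. Z (x',r)) R = map_pmf snd (map_pmf (\<lambda>r. (Y (x',r), Z (x',r))) R)" for x'
    by (simp add: pmf.map_comp o_def)
  have hzz: "h z = g x" using hz[OF x] z_def by simp
  have A': "A x' = (if g x' = g x then A x else 0)" if x': "x' \<in> set_pmf PX" for x'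
  proof (cases "g x' = g x")
    case True then show ?thesis using K[OF x x'] A_def by simp
  next
    case False
    have "(y,z) \<notin> set_pmf (map_pmf (\<lambda>r. (Y (x',r), Z (x',r))) R)"
      using False hz[OF x'] hzz by auto
    then show ?thesis using False A_def by (simp add: pmf_eq_0_set_pmf)
  qed
  have B': "B x' = (if g x' = g x then B x else 0)" if x': "x' \<in> set_pmf PX" for x'
  proof (cases "g x' = g x")
    case True then show ?thesis using K[OF x x'] B_def Bm by metis
  next
    case False
    have "z \<notin> set_pmf (map_pmf (\<lambda>r. Z (x',r)) R)"
      using False hz[OF x'] hzz by auto
    then show ?thesis using False B_def by (simp add: pmf_eq_0_set_pmf)
  qed
  have pxyz: "pmf (map_pmf (\<lambda>\<omega>. (fst \<omega>, Y \<omega>, Z \<omega>)) ?M) (x,y,z) = pmf PX x * A x"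
  proof -
    have "pmf (map_pmf (\<lambda>\<omega>. (fst \<omega>, Y \<omega>, Z \<omega>)) ?M) (x,y,z)
        = (\<Sum>x'\<in>set_pmf PX. pmf PX x' * (if x' = x then A x' else 0))"
      unfolding pmf_map_pair[OF fX] A_def by (simp add: pmf_map_Pair_pt[where F="\<lambda>r. (Y (_,r), Z (_,r))"])
    also have "\<dots> = pmf PX x * A x" using fX x by (simp add: if_distrib[of "\<lambda>v. _ * v"] cong: if_cong)
    finally show ?thesis .
  qed
  have pxz: "pmf (map_pmf (\<lambda>\<omega>. (fst \<omega>, Z \<omega>)) ?M) (x,z) = pmf PX x * B x"
  proof -
    have "pmf (map_pmf (\<lambda>\<omega>. (fst \<omega>, Z \<omega>)) ?M) (x,z)
        = (\<Sum>x'\<in>set_pmf PX. pmf PX x' * (if x' = x then B x' else 0))"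
      unfolding pmf_map_pair[OF fX] B_def by (simp add: pmf_map_Pair_pt[where F="\<lambda>r. Z (_,r)"])
    also have "\<dots> = pmf PX x * B x" using fX x by (simp add: if_distrib[of "\<lambda>v. _ * v"] cong: if_cong)
    finally show ?thesis .
  qed
  have pyz: "pmf (map_pmf (\<lambda>\<omega>. (Y \<omega>, Z \<omega>)) ?M) (y,z) = A x * PG"
  proof -
    have "pmf (map_pmf (\<lambda>\<omega>. (Y \<omega>, Z \<omega>)) ?M) (y,z) = (\<Sum>x'\<in>set_pmf PX. pmf PX x' * A x')"
      unfolding pmf_map_pair[OF fX] A_def by simp
    also have "\<dots> = (\<Sum>x'\<in>set_pmf PX. pmf PX x' * (if g x' = g x then A x else 0))"
      using A' by (intro sum.cong) auto
    also have "\<dots> = A x * PG" unfolding PG_def by (simp add: sum_distrib_left if_distrib mult.commute cong: if_cong)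
    finally show ?thesis .
  qed
  have pz: "pmf (map_pmf Z ?M) z = B x * PG"
  proof -
    have "pmf (map_pmf Z ?M) z = (\<Sum>x'\<in>set_pmf PX. pmf PX x' * B x')"
      unfolding pmf_map_pair[OF fX] B_def by simp
    also have "\<dots> = (\<Sum>x'\<in>set_pmf PX. pmf PX x' * (if g x' = g x then B x else 0))"
      using B' by (intro sum.cong) auto
    also have "\<dots> = B x * PG" unfolding PG_def by (simp add: sum_distrib_left if_distrib mult.commute cong: if_cong)
    finally show ?thesis .
  qed
  have pos1: "pmf (map_pmf (\<lambda>\<omega>. (fst \<omega>, Y \<omega>, Z \<omega>)) ?M) (x,y,z) \<noteq> 0"
  proof -
    have "(x, r) \<in> set_pmf ?M" using x r by (simp add: set_pair_pmf)
    then have "(x,y,z) \<in> set_pmf (map_pmf (\<lambda>\<omega>. (fst \<omega>, Y \<omega>, Z \<omega>)) ?M)"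
      unfolding y_def z_def by (auto intro!: image_eqI)
    then show ?thesis by (metis set_pmf_iff)
  qed
  have pos2: "pmf (map_pmf Z ?M) z \<noteq> 0"
  proof -
    have "(x, r) \<in> set_pmf ?M" using x r by (simp add: set_pair_pmf)
    then have "z \<in> set_pmf (map_pmf Z ?M)"
      unfolding z_def by (auto intro!: image_eqI)
    then show ?thesis by (metis set_pmf_iff)
  qed
  have r0: "pmf PX x * A x * (B x * PG) / (pmf PX x * B x * (A x * PG)) = 1"
    using pos1 pos2 unfolding pxyz pz by simp
  have r1: "pmf (map_pmf (\<lambda>\<omega>. (fst \<omega>, Y \<omega>, Z \<omega>)) ?M) (x,y,z) * pmf (map_pmf Z ?M) z /
     (pmf (map_pmf (\<lambda>\<omega>. (fst \<omega>, Z \<omega>)) ?M) (x,z) * pmf (map_pmf (\<lambda>\<omega>. (Y \<omega>, Z \<omega>)) ?M) (y,z)) = 1"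
    using r0 by (simp only: pxyz pxz pyz pz)
  then show "(case t of (x, y, z) \<Rightarrow>
          let pxyz = pmf (map_pmf (\<lambda>\<omega>. (fst \<omega>, Y \<omega>, Z \<omega>)) ?M) (x, y, z);
              pz = pmf (map_pmf Z ?M) z;
              pxz = pmf (map_pmf (\<lambda>\<omega>. (fst \<omega>, Z \<omega>)) ?M) (x, z);
              pyz = pmf (map_pmf (\<lambda>\<omega>. (Y \<omega>, Z \<omega>)) ?M) (y, z)
          in pxyz * log 2 (pxyz * pz / (pxz * pyz))) = 0"
    unfolding t y_def[symmetric] z_def[symmetric] Let_def prod.case r1 by simp
qed


lemma extend_set:
  assumes "Tc \<subseteq> A" "card Tc \<le> T" "T \<le> card A" "finite A"
  obtains T' where "Tc \<subseteq> T'" "T' \<subseteq> A" "card T' = T"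
proof -
  have fT: "finite Tc" using assms finite_subset by blast
  have "card (A - Tc) = card A - card Tc" using assms fT by (simp add: card_Diff_subset)
  then have "T - card Tc \<le> card (A - Tc)" using assms by linarith
  then obtain X where X: "X \<subseteq> A - Tc" "card X = T - card Tc" "finite X"
    using obtain_subset_with_card_n by metis
  have "card (Tc \<union> X) = card Tc + card X" using X fT by (intro card_Un_disjoint) auto
  then have "card (Tc \<union> X) = T" using X assms by simp
  then show ?thesis using that[of "Tc \<union> X"] X assms by blast
qed

lemma exists_L:
  fixes W :: "'a::{field,finite} mat"
  assumes W: "W \<in> carrier_mat U N" and TU: "T < U" and TN: "T \<le> N"
    and Tc: "Tc \<subseteq> {..<N}" "card Tc \<le> T"
    and inv: "\<And>S. S \<subseteq> {..<N} \<Longrightarrow> card S = T \<Longrightarrow> invertible_mat (submatrix W {U-T..<U} S)"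
  shows "\<exists>L :: (nat \<Rightarrow> 'a) \<Rightarrow> (nat \<Rightarrow> 'a).
     (\<forall>v t. t \<in> Tc \<longrightarrow> (\<Sum>k<U-T. v k * W $$ (k,t)) = (\<Sum>k\<in>{U-T..<U}. L v k * W $$ (k,t))) \<and>
     (\<forall>(I::nat set) vs. finite I \<longrightarrow> (\<forall>k'<U-T. (\<Sum>i\<in>I. vs i k') = 0) \<longrightarrow>
         (\<forall>k\<in>{U-T..<U}. (\<Sum>i\<in>I. L (vs i) k) = 0))"
proof -
  obtain T' where T': "Tc \<subseteq> T'" "T' \<subseteq> {..<N}" "card T' = T"
    using extend_set[OF Tc(1) Tc(2)] TN by auto
  define D0 where "D0 = {U-T..<U}"
  define E where "E = PiE D0 (\<lambda>_. (UNIV :: 'a set))"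
  define E' where "E' = PiE T' (\<lambda>_. (UNIV :: 'a set))"
  define f where "f = (\<lambda>n. \<lambda>t\<in>T'. \<Sum>k\<in>D0. n k * W $$ (k,t))"
  define rhs where "rhs = (\<lambda>v. \<lambda>t\<in>T'. \<Sum>k<U-T. v k * W $$ (k,t))"
  have fT': "finite T'" using T' finite_subset by blast
  have cD0: "card D0 = T" unfolding D0_def using TU by simp
  have invT: "invertible_mat (submatrix W D0 T')" using inv[OF T'(2,3)] D0_def by simp
  have inj: "inj_on f E"
  proof (rule inj_onI)
    fix n1 n2 assume n1: "n1 \<in> E" and n2: "n2 \<in> E" and e: "f n1 = f n2"
    have "\<forall>j\<in>T'. (\<Sum>k\<in>D0. (n1 k - n2 k) * W $$ (k,j)) = 0"
    proof
      fix j assume j: "j \<in> T'"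
      have "f n1 j = f n2 j" using e by simp
      then show "(\<Sum>k\<in>D0. (n1 k - n2 k) * W $$ (k,j)) = 0"
        using j unfolding f_def by (simp add: left_diff_distrib sum_subtractf)
    qed
    then have "\<And>k. k \<in> D0 \<Longrightarrow> n1 k - n2 k = 0"
    proof -
      fix k assume "k \<in> D0"
      moreover have "D0 \<subseteq> {..<U}" unfolding D0_def by auto
      moreover have "card D0 = card T'" using cD0 T'(3) by simp
      ultimately show "n1 k - n2 k = 0"
        using sub_zero[OF W _ T'(2) _ invT, of "\<lambda>k. n1 k - n2 k"] \<open>\<forall>j\<in>T'. _\<close> by blast
    qed
    then show "n1 = n2" using n1 n2 unfolding E_def by (intro PiE_ext) auto
  qed
  have sub: "f ` E \<subseteq> E'" unfolding f_def E'_def by auto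
  have "card (f ` E) = card E" using card_image[OF inj] .
  also have "\<dots> = card E'" unfolding E_def E'_def using cD0 T'(3) fT'
    by (simp add: card_PiE D0_def)
  finally have img: "f ` E = E'" using sub by (intro card_subset_eq) (auto simp: E'_def fT' finite_PiE)
  define L where "L = (\<lambda>v. the_inv_into E f (rhs v))"
  have rhsE: "rhs v \<in> f ` E" for v unfolding img rhs_def E'_def by auto
  have LE: "L v \<in> E" for v unfolding L_def using the_inv_into_into[OF inj rhsE] by simp
  have fL: "f (L v) = rhs v" for v unfolding L_def using f_the_inv_into_f[OF inj rhsE] .
  have P1: "\<forall>v t. t \<in> Tc \<longrightarrow> (\<Sum>k<U-T. v k * W $$ (k,t)) = (\<Sum>k\<in>{U-T..<U}. L v k * W $$ (k,t))"
  proof (intro allI impI)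
    fix v t assume t: "t \<in> Tc"
    then have t': "t \<in> T'" using T' by blast
    have "f (L v) t = rhs v t" using fL by simp
    then show "(\<Sum>k<U-T. v k * W $$ (k,t)) = (\<Sum>k\<in>{U-T..<U}. L v k * W $$ (k,t))"
      using t' unfolding f_def rhs_def D0_def by simp
  qed
  have P2: "\<forall>(I::nat set) vs. finite I \<longrightarrow> (\<forall>k'<U-T. (\<Sum>i\<in>I. vs i k') = 0) \<longrightarrow>
         (\<forall>k\<in>{U-T..<U}. (\<Sum>i\<in>I. L (vs i) k) = 0)"
  proof (intro allI impI)
    fix I :: "nat set" and vs :: "nat \<Rightarrow> nat \<Rightarrow> 'a" assume fI: "finite I" and z: "\<forall>k'<U-T. (\<Sum>i\<in>I. vs i k') = 0"
    define n where "n = (\<lambda>k\<in>D0. \<Sum>i\<in>I. L (vs i) k)"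
    define n0 where "n0 = (\<lambda>k\<in>D0. (0::'a))"
    have nE: "n \<in> E" "n0 \<in> E" unfolding n_def n0_def E_def by auto
    have "f n = f n0"
    proof (rule ext)
      fix t show "f n t = f n0 t"
      proof (cases "t \<in> T'")
        case False then show ?thesis unfolding f_def by simp
      next
        case True
        have "f n t = (\<Sum>k\<in>D0. (\<Sum>i\<in>I. L (vs i) k) * W $$ (k,t))"
          using True unfolding f_def n_def by simp
        also have "\<dots> = (\<Sum>i\<in>I. f (L (vs i)) t)"
          using True unfolding f_def by (simp add: sum_distrib_right) (rule sum.swap)
        also have "\<dots> = (\<Sum>i\<in>I. \<Sum>k<U-T. vs i k * W $$ (k,t))"
          using True fL unfolding rhs_def by simp
        also have "\<dots> = (\<Sum>k<U-T. (\<Sum>i\<in>I. vs i k) * W $$ (k,t))"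
          by (simp add: sum_distrib_right) (rule sum.swap)
        also have "\<dots> = 0" using z by simp
        also have "\<dots> = f n0 t" using True unfolding f_def n0_def by simp
        finally show ?thesis .
      qed
    qed
    then have "n = n0" using inj nE by (meson inj_onD)
    then show "\<forall>k\<in>{U-T..<U}. (\<Sum>i\<in>I. L (vs i) k) = 0"
      unfolding n_def n0_def D0_def by (metis restrict_apply')
  qed
  show ?thesis using P1 P2 by blast
qed


lemma sum_split_U:
  fixes f :: "nat \<Rightarrow> 'b::comm_monoid_add"
  assumes "V \<le> U"
  shows "(\<Sum>k<U. f k) = (\<Sum>k<V. f k) + (\<Sum>k\<in>{V..<U}. f k)"
  using assms by (metis lessThan_atLeast0 sum.atLeastLessThan_concat zero_le)

lemma map_pmf_of_set_self:
  assumes "finite A" "A \<noteq> {}" "inj_on f A" "f ` A \<subseteq> A"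
  shows "map_pmf f (pmf_of_set A) = pmf_of_set A"
proof -
  have "card (f ` A) = card A" using card_image[OF assms(3)] .
  then have "f ` A = A" using assms by (intro card_subset_eq) auto
  then show ?thesis using map_pmf_of_set_inj[OF assms(3,2,1)] by simp
qed

lemma blk_lt:
  fixes k l m :: nat
  assumes "k < V" "l < m" shows "k * m + l < V * m"
proof -
  have "k * m + l < (k + 1) * m" using assms by simp
  also have "\<dots> \<le> V * m" using assms by (intro mult_le_mono1) simp
  finally show ?thesis .
qed

lemma K_lemma:
  fixes W :: "'a::{field,finite} mat" and L :: "(nat \<Rightarrow> 'a) \<Rightarrow> (nat \<Rightarrow> 'a)"
  assumes TU: "T < U" and dv: "(U - T) dvd d"
    and L1: "\<forall>v t. t \<in> Tc \<longrightarrow> (\<Sum>k<U-T. v k * W $$ (k,t)) = (\<Sum>k\<in>{U-T..<U}. L v k * W $$ (k,t))"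
    and L2: "\<forall>(I::nat set) vs. finite I \<longrightarrow> (\<forall>k'<U-T. (\<Sum>i\<in>I. vs i k') = 0) \<longrightarrow>
         (\<forall>k\<in>{U-T..<U}. (\<Sum>i\<in>I. L (vs i) k) = 0)"
    and U1: "U1 \<subseteq> {..<N}" and Tc: "Tc \<subseteq> {..<N}"
    and x: "x \<in> PiE {..<N} (\<lambda>_. fvecs d)" and x': "x' \<in> PiE {..<N} (\<lambda>_. fvecs d)"
    and sx: "\<forall>p<d. (\<Sum>i\<in>U1. x i p) = (\<Sum>i\<in>U1. x' i p)"
    and cx: "\<forall>t\<in>Tc. x t = x' t"
  shows "map_pmf (\<lambda>r. (server_view W N d U T U1 (x,r),
            ((\<lambda>p\<in>{..<d}. \<Sum>i\<in>U1. x i p), colluders_view W N d U T Tc (x,r)))) (rand_pmf N d U T)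
       = map_pmf (\<lambda>r. (server_view W N d U T U1 (x',r),
            ((\<lambda>p\<in>{..<d}. \<Sum>i\<in>U1. x' i p), colluders_view W N d U T Tc (x',r)))) (rand_pmf N d U T)"
proof -
  define m where "m = sublen d U T"
  have dm: "d = (U - T) * m" using dv unfolding m_def sublen_def by simp
  have blk: "k * m + l < d" if "k < U - T" "l < m" for k l
    using blk_lt[OF that] dm by simp
  define \<delta> where "\<delta> = (\<lambda>i p. x' i p - x i p)"
  define \<epsilon> where "\<epsilon> = (\<lambda>i k l. L (\<lambda>k'. \<delta> i (k' * m + l)) k)"
  define c where "c = (\<lambda>i k l. if k < U - T then - \<delta> i (k * m + l) else \<epsilon> i k l)"
  define \<phi>1 where "\<phi>1 = (\<lambda>zs::'a fvec fvec. \<lambda>i\<in>{..<N}. \<lambda>p\<in>{..<d}. zs i p - \<delta> i p)"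
  define \<phi>2 where "\<phi>2 = (\<lambda>ns::nat \<Rightarrow> nat \<Rightarrow> 'a fvec. \<lambda>i\<in>{..<N}. \<lambda>k\<in>{U-T..<U}. \<lambda>l\<in>{..<m}. ns i k l + \<epsilon> i k l)"
  define MS where "MS = (masks_space N d :: 'a fvec fvec set)"
  define NS where "NS = (noise_space N d U T :: (nat \<Rightarrow> nat \<Rightarrow> 'a fvec) set)"
  have fMS: "finite MS" "MS \<noteq> {}" unfolding MS_def masks_space_def fvecs_def
    by (auto intro!: finite_PiE simp: PiE_eq_empty_iff)
  have fNS: "finite NS" "NS \<noteq> {}" unfolding NS_def noise_space_def fvecs_def
    by (auto intro!: finite_PiE simp: PiE_eq_empty_iff)
  have M1: "map_pmf \<phi>1 (pmf_of_set MS) = pmf_of_set MS"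
  proof (rule map_pmf_of_set_self[OF fMS])
    show "\<phi>1 ` MS \<subseteq> MS" unfolding \<phi>1_def MS_def masks_space_def fvecs_def by auto
    show "inj_on \<phi>1 MS"
    proof (rule inj_onI)
      fix z1 z2 assume z1: "z1 \<in> MS" and z2: "z2 \<in> MS" and e: "\<phi>1 z1 = \<phi>1 z2"
      show "z1 = z2"
      proof (rule PiE_ext[OF z1[unfolded MS_def masks_space_def] z2[unfolded MS_def masks_space_def]])
        fix i assume i: "i \<in> {..<N}"
        have zi: "z1 i \<in> fvecs d" "z2 i \<in> fvecs d"
          using z1 z2 i unfolding MS_def masks_space_def by auto
        show "z1 i = z2 i"
        proof (rule PiE_ext[OF zi[unfolded fvecs_def]])
          fix p assume p: "p \<in> {..<d}"
          have "\<phi>1 z1 i p = \<phi>1 z2 i p" using e by simp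
          then show "z1 i p = z2 i p" using i p unfolding \<phi>1_def by simp
        qed
      qed
    qed
  qed
  have \<phi>2NS: "\<phi>2 ` NS \<subseteq> NS" unfolding \<phi>2_def NS_def noise_space_def fvecs_def m_def by (auto simp only: restrict_PiE_iff image_subset_iff UNIV_I)
  have M2: "map_pmf \<phi>2 (pmf_of_set NS) = pmf_of_set NS"
  proof (rule map_pmf_of_set_self[OF fNS])
    show "\<phi>2 ` NS \<subseteq> NS" using \<phi>2NS .
    show "inj_on \<phi>2 NS"
    proof (rule inj_onI)
      fix z1 z2 assume z1: "z1 \<in> NS" and z2: "z2 \<in> NS" and e: "\<phi>2 z1 = \<phi>2 z2"
      show "z1 = z2"
      proof (rule PiE_ext[OF z1[unfolded NS_def noise_space_def] z2[unfolded NS_def noise_space_def]])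
        fix i assume i: "i \<in> {..<N}"
        have zi: "z1 i \<in> PiE {U-T..<U} (\<lambda>_. fvecs m)" "z2 i \<in> PiE {U-T..<U} (\<lambda>_. fvecs m)"
          using z1 z2 i unfolding NS_def noise_space_def m_def by auto
        show "z1 i = z2 i"
        proof (rule PiE_ext[OF zi])
          fix k assume k: "k \<in> {U-T..<U}"
          have zk: "z1 i k \<in> fvecs m" "z2 i k \<in> fvecs m" using zi k by auto
          show "z1 i k = z2 i k"
          proof (rule PiE_ext[OF zk[unfolded fvecs_def]])
            fix l assume l: "l \<in> {..<m}"
            have "\<phi>2 z1 i k l = \<phi>2 z2 i k l" using e by simp
            then show "z1 i k l = z2 i k l" using i k l unfolding \<phi>2_def by simp
          qed
        qed
      qed
    qed
  qed
  have R: "rand_pmf N d U T = map_pmf (\<lambda>(a, b). (\<phi>1 a, \<phi>2 b)) (rand_pmf N d U T)"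
    unfolding rand_pmf_def map_pair M1[unfolded MS_def] M2[unfolded NS_def] ..
  have setR: "set_pmf (rand_pmf N d U T) = MS \<times> NS"
    unfolding rand_pmf_def MS_def NS_def using fMS fNS unfolding MS_def NS_def by simp
  have main: "(server_view W N d U T U1 (x', \<phi>1 zs, \<phi>2 ns),
            ((\<lambda>p\<in>{..<d}. \<Sum>i\<in>U1. x' i p), colluders_view W N d U T Tc (x', \<phi>1 zs, \<phi>2 ns)))
        = (server_view W N d U T U1 (x, zs, ns),
            ((\<lambda>p\<in>{..<d}. \<Sum>i\<in>U1. x i p), colluders_view W N d U T Tc (x, zs, ns)))"
    if zs: "zs \<in> MS" and ns: "ns \<in> NS" for zs ns
  proof -
    have enc: "enc_mask W d U T (\<phi>1 zs i) (\<phi>2 ns i) j =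
        (\<lambda>l\<in>{..<m}. enc_mask W d U T (zs i) (ns i) j l + (\<Sum>k<U. c i k l * W $$ (k,j)))"
      if i: "i < N" for i j
    proof (rule ext)
      fix l show "enc_mask W d U T (\<phi>1 zs i) (\<phi>2 ns i) j l =
        (\<lambda>l\<in>{..<m}. enc_mask W d U T (zs i) (ns i) j l + (\<Sum>k<U. c i k l * W $$ (k,j))) l"
      proof (cases "l < m")
        case False then show ?thesis unfolding enc_mask_def m_def by simp
      next
        case True
        have co: "coeff d U T (\<phi>1 zs i) (\<phi>2 ns i) k l = coeff d U T (zs i) (ns i) k l + c i k l"
          if k: "k < U" for k
        proof (cases "k < U - T")
          case True
          then show ?thesis using blk[OF True \<open>l < m\<close>] i unfolding coeff_def c_def \<phi>1_def m_def
            by simp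
        next
          case False
          then show ?thesis using k i \<open>l < m\<close> unfolding coeff_def c_def \<phi>2_def m_def by simp
        qed
        have "enc_mask W d U T (\<phi>1 zs i) (\<phi>2 ns i) j l
            = (\<Sum>k<U. (coeff d U T (zs i) (ns i) k l + c i k l) * W $$ (k, j))"
          unfolding enc_mask_def using True co m_def by simp
        also have "\<dots> = enc_mask W d U T (zs i) (ns i) j l + (\<Sum>k<U. c i k l * W $$ (k,j))"
          unfolding enc_mask_def using True m_def by (simp add: distrib_right sum.distrib)
        finally show ?thesis using True by simp
      qed
    qed
    have ct: "(\<Sum>k<U. c i k l * W $$ (k,t)) = 0" if t: "t \<in> Tc" for i l t
    proof -
      have "(\<Sum>k<U. c i k l * W $$ (k,t)) = (\<Sum>k<U-T. c i k l * W $$ (k,t)) + (\<Sum>k\<in>{U-T..<U}. c i k l * W $$ (k,t))"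
        by (rule sum_split_U) simp
      also have "\<dots> = - (\<Sum>k<U-T. \<delta> i (k * m + l) * W $$ (k,t)) + (\<Sum>k\<in>{U-T..<U}. \<epsilon> i k l * W $$ (k,t))"
      proof -
        have "(\<Sum>k<U-T. c i k l * W $$ (k,t)) = (\<Sum>k<U-T. - (\<delta> i (k * m + l) * W $$ (k,t)))"
          unfolding c_def by (intro sum.cong) auto
        moreover have "(\<Sum>k\<in>{U-T..<U}. c i k l * W $$ (k,t)) = (\<Sum>k\<in>{U-T..<U}. \<epsilon> i k l * W $$ (k,t))"
          unfolding c_def by (intro sum.cong) auto
        ultimately show ?thesis by (simp add: sum_negf)
      qed
      also have "\<dots> = 0" using spec[OF spec[OF L1, of "\<lambda>k'. \<delta> i (k' * m + l)"], of t] t unfolding \<epsilon>_def by simp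
      finally show ?thesis .
    qed
    have fU1: "finite U1" using U1 finite_subset by blast
    have cagg: "(\<Sum>i\<in>U1. c i k l) = 0" if k: "k < U" and l: "l < m" for k l
    proof (cases "k < U - T")
      case True
      have "(\<Sum>i\<in>U1. c i k l) = - (\<Sum>i\<in>U1. x' i (k * m + l)) + (\<Sum>i\<in>U1. x i (k * m + l))"
        unfolding c_def \<delta>_def using True by (simp add: sum_subtractf sum_negf)
      then show ?thesis using sx blk[OF True l] by simp
    next
      case False
      have "\<forall>k'<U-T. (\<Sum>i\<in>U1. (\<lambda>i k'. \<delta> i (k' * m + l)) i k') = 0"
        using sx blk l unfolding \<delta>_def by (simp add: sum_subtractf)
      then have "\<forall>k\<in>{U-T..<U}. (\<Sum>i\<in>U1. L ((\<lambda>i k'. \<delta> i (k' * m + l)) i) k) = 0"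
        using spec[OF spec[OF L2, of U1], of "\<lambda>i k'. \<delta> i (k' * m + l)"] fU1 by (metis (no_types, lifting))
      then show ?thesis using False k unfolding c_def \<epsilon>_def by simp
    qed
    have sv1: "(\<lambda>i\<in>{..<N}. \<lambda>p\<in>{..<d}. x' i p + \<phi>1 zs i p) = (\<lambda>i\<in>{..<N}. \<lambda>p\<in>{..<d}. x i p + zs i p)"
      unfolding \<phi>1_def \<delta>_def by (intro restrict_ext) simp
    have sv2: "agg_msg W d U T U1 (\<phi>1 zs) (\<phi>2 ns) j = agg_msg W d U T U1 zs ns j" for j
    proof -
      have "agg_msg W d U T U1 (\<phi>1 zs) (\<phi>2 ns) j
          = (\<lambda>l\<in>{..<m}. \<Sum>i\<in>U1. enc_mask W d U T (zs i) (ns i) j l + (\<Sum>k<U. c i k l * W $$ (k,j)))"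
        unfolding agg_msg_def m_def[symmetric] using enc U1 by (intro restrict_ext sum.cong) auto
      also have "\<dots> = (\<lambda>l\<in>{..<m}. (\<Sum>i\<in>U1. enc_mask W d U T (zs i) (ns i) j l) + (\<Sum>k<U. (\<Sum>i\<in>U1. c i k l) * W $$ (k,j)))"
        by (intro restrict_ext) (simp add: sum.distrib sum_distrib_right sum.swap[of _ U1])
      also have "\<dots> = agg_msg W d U T U1 zs ns j"
        unfolding agg_msg_def m_def[symmetric] using cagg by (intro restrict_ext) simp
      finally show ?thesis .
    qed
    have \<delta>0: "\<delta> t p = 0" if "t \<in> Tc" for t p using cx that unfolding \<delta>_def by simp
    have \<epsilon>0: "\<epsilon> t k l = 0" if t: "t \<in> Tc" and k: "k \<in> {U-T..<U}" for t k l
    proof -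
      have "\<forall>k'<U-T. (\<Sum>i\<in>{t}. (\<lambda>i k'. \<delta> i (k' * m + l)) i k') = 0" using \<delta>0[OF t] by simp
      then have "\<forall>k\<in>{U-T..<U}. (\<Sum>i\<in>{t}. L ((\<lambda>i k'. \<delta> i (k' * m + l)) i) k) = 0"
        using mp[OF mp[OF spec[OF spec[OF L2, of "{t}"], of "\<lambda>i k'. \<delta> i (k' * m + l)"]]] by blast
      then show ?thesis using k unfolding \<epsilon>_def by simp
    qed
    have \<phi>1t: "\<phi>1 zs t = zs t" if t: "t \<in> Tc" for t
    proof -
      have tN: "t < N" using t Tc by auto
      have zt: "zs t \<in> fvecs d" using zs tN unfolding MS_def masks_space_def by auto
      show ?thesis
      proof (rule ext)
        fix p show "\<phi>1 zs t p = zs t p"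
        proof (cases "p < d")
          case True
          have "\<phi>1 zs t p = zs t p - \<delta> t p" unfolding \<phi>1_def using tN True by (simp only: restrict_apply' lessThan_iff)
          then show ?thesis using \<delta>0[OF t, of p] by (simp only: diff_zero)
        next
          case False
          then have "zs t p = undefined" using zt unfolding fvecs_def by (meson PiE_arb lessThan_iff)
          moreover have "\<phi>1 zs t p = undefined" unfolding \<phi>1_def using tN False by (simp only: restrict_apply' lessThan_iff restrict_apply if_False if_True)
          ultimately show ?thesis by (simp only:)
        qed
      qed
    qed
    have \<phi>2t: "\<phi>2 ns t = ns t" if t: "t \<in> Tc" for t
    proof -
      have tN: "t \<in> {..<N}" using t Tc by auto
      have "\<phi>2 ns \<in> NS" using \<phi>2NS ns by auto
      then have a: "\<phi>2 ns t \<in> PiE {U-T..<U} (\<lambda>_. fvecs m)" and b: "ns t \<in> PiE {U-T..<U} (\<lambda>_. fvecs m)"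
        using ns tN unfolding NS_def noise_space_def m_def by auto
      show ?thesis
      proof (rule PiE_ext[OF a b])
        fix k assume k: "k \<in> {U-T..<U}"
        have ak: "\<phi>2 ns t k \<in> fvecs m" "ns t k \<in> fvecs m" using a b k by auto
        show "\<phi>2 ns t k = ns t k"
        proof (rule PiE_ext[OF ak[unfolded fvecs_def]])
          fix l assume l: "l \<in> {..<m}"
          have "\<phi>2 ns t k l = ns t k l + \<epsilon> t k l" unfolding \<phi>2_def using tN k l by (simp only: restrict_apply')
          then show "\<phi>2 ns t k l = ns t k l" using \<epsilon>0[OF t k, of l] by (simp only: add_0_right)
        qed
      qed
    qed
    have enct: "enc_mask W d U T (\<phi>1 zs i) (\<phi>2 ns i) t = enc_mask W d U T (zs i) (ns i) t"
      if t: "t \<in> Tc" and i: "i < N" for i t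
    proof -
      have "enc_mask W d U T (\<phi>1 zs i) (\<phi>2 ns i) t = (\<lambda>l\<in>{..<m}. enc_mask W d U T (zs i) (ns i) t l + (\<Sum>k<U. c i k l * W $$ (k,t)))"
        by (rule enc[OF i])
      also have "\<dots> = (\<lambda>l\<in>{..<m}. enc_mask W d U T (zs i) (ns i) t l)"
        by (simp only: ct[OF t] add_0_right)
      also have "\<dots> = enc_mask W d U T (zs i) (ns i) t"
        unfolding enc_mask_def m_def by (rule ext) simp
      finally show ?thesis .
    qed
    have cv: "colluders_view W N d U T Tc (x', \<phi>1 zs, \<phi>2 ns) = colluders_view W N d U T Tc (x, zs, ns)"
      unfolding colluders_view_def prod.case
    proof (rule restrict_ext)
      fix t assume t: "t \<in> Tc"
      have e4: "(\<lambda>i\<in>{..<N} - {t}. enc_mask W d U T (\<phi>1 zs i) (\<phi>2 ns i) t)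
          = (\<lambda>i\<in>{..<N} - {t}. enc_mask W d U T (zs i) (ns i) t)"
      proof (rule restrict_ext)
        fix i assume "i \<in> {..<N} - {t}"
        then have "i < N" by simp
        then show "enc_mask W d U T (\<phi>1 zs i) (\<phi>2 ns i) t = enc_mask W d U T (zs i) (ns i) t"
          by (rule enct[OF t])
      qed
      have "x' t = x t" using cx t by simp
      then show "(x' t, \<phi>1 zs t, \<phi>2 ns t, \<lambda>i\<in>{..<N} - {t}. enc_mask W d U T (\<phi>1 zs i) (\<phi>2 ns i) t) =
          (x t, zs t, ns t, \<lambda>i\<in>{..<N} - {t}. enc_mask W d U T (zs i) (ns i) t)"
        by (simp only: e4 \<phi>1t[OF t] \<phi>2t[OF t])
    qed
    have ss: "(\<lambda>p\<in>{..<d}. \<Sum>i\<in>U1. x' i p) = (\<lambda>p\<in>{..<d}. \<Sum>i\<in>U1. x i p)"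
      using sx by (intro restrict_ext) simp
    have sv2': "agg_msg W d U T U1 (\<phi>1 zs) (\<phi>2 ns) = agg_msg W d U T U1 zs ns" using sv2 by (rule ext)
    show ?thesis unfolding server_view_def prod.case by (simp only: sv1 sv2' ss cv)
  qed
  show ?thesis
    apply (subst (2) R)
    apply (simp add: pmf.map_comp o_def)
    apply (rule map_pmf_cong[OF refl])
    using main setR by (auto simp: split_beta)
qed


lemma privacy:
  fixes W :: "'a::{field,finite} mat"
  assumes TU: "T < U" and TN: "T \<le> N" and dv: "(U - T) dvd d" and mds: "T_private_MDS W U N T"
  shows "lightsecagg_private W N d U T"
  unfolding lightsecagg_private_def
proof (intro allI impI)
  fix PX :: "'a fvec fvec pmf" and U1 Tc :: "nat set"
  assume PX: "set_pmf PX \<subseteq> PiE {..<N} (\<lambda>_. fvecs d)" and U1: "U1 \<subseteq> {..<N}"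
    and Tc: "Tc \<subseteq> {..<N}" and cTc: "card Tc \<le> T"
  have W: "W \<in> carrier_mat U N" using mds unfolding T_private_MDS_def MDS_mat_def by auto
  have inv: "\<And>S. S \<subseteq> {..<N} \<Longrightarrow> card S = T \<Longrightarrow> invertible_mat (submatrix W {U-T..<U} S)"
    using mds unfolding T_private_MDS_def by auto
  obtain L :: "(nat \<Rightarrow> 'a) \<Rightarrow> (nat \<Rightarrow> 'a)" where
    L1: "\<forall>v t. t \<in> Tc \<longrightarrow> (\<Sum>k<U-T. v k * W $$ (k,t)) = (\<Sum>k\<in>{U-T..<U}. L v k * W $$ (k,t))" and
    L2: "\<forall>(I::nat set) vs. finite I \<longrightarrow> (\<forall>k'<U-T. (\<Sum>i\<in>I. vs i k') = 0) \<longrightarrow>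
         (\<forall>k\<in>{U-T..<U}. (\<Sum>i\<in>I. L (vs i) k) = 0)"
    using exists_L[OF W TU TN Tc cTc inv] by blast
  have fX: "finite (set_pmf PX)"
    by (rule finite_subset[OF PX]) (auto simp: fvecs_def intro!: finite_PiE)
  show "cond_mutual_info (pair_pmf PX (rand_pmf N d U T)) (\<lambda>\<omega>. fst \<omega>) (server_view W N d U T U1)
          (\<lambda>\<omega>. (\<lambda>p\<in>{..<d}. \<Sum>i\<in>U1. fst \<omega> i p, colluders_view W N d U T Tc \<omega>)) = 0"
  proof (rule cmi_zero[OF fX, where g = "\<lambda>x. ((\<lambda>p\<in>{..<d}. \<Sum>i\<in>U1. x i p), (\<lambda>t\<in>Tc. x t))"
        and h = "\<lambda>(s, cv). (s, \<lambda>t\<in>Tc. fst (cv t))"])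
    fix x r
    show "(case (\<lambda>p\<in>{..<d}. \<Sum>i\<in>U1. fst (x, r) i p, colluders_view W N d U T Tc (x, r)) of
          (s, cv) \<Rightarrow> (s, \<lambda>t\<in>Tc. fst (cv t))) = (\<lambda>p\<in>{..<d}. \<Sum>i\<in>U1. x i p, \<lambda>t\<in>Tc. x t)"
      by (cases r) (auto simp: colluders_view_def intro!: restrict_ext)
  next
    fix x x' assume x: "x \<in> set_pmf PX" and x': "x' \<in> set_pmf PX"
      and g: "((\<lambda>p\<in>{..<d}. \<Sum>i\<in>U1. x i p), (\<lambda>t\<in>Tc. x t)) = ((\<lambda>p\<in>{..<d}. \<Sum>i\<in>U1. x' i p), (\<lambda>t\<in>Tc. x' t))"
    have sx: "\<forall>p<d. (\<Sum>i\<in>U1. x i p) = (\<Sum>i\<in>U1. x' i p)"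
    proof (intro allI impI)
      fix p assume "p < d"
      then show "(\<Sum>i\<in>U1. x i p) = (\<Sum>i\<in>U1. x' i p)"
        using fun_cong[OF arg_cong[OF g, of fst], of p] by simp
    qed
    have cx: "\<forall>t\<in>Tc. x t = x' t"
    proof
      fix t assume "t \<in> Tc"
      then show "x t = x' t"
        using fun_cong[OF arg_cong[OF g, of snd], of t] by simp
    qed
    show "map_pmf (\<lambda>r. (server_view W N d U T U1 (x, r),
              (\<lambda>p\<in>{..<d}. \<Sum>i\<in>U1. fst (x, r) i p, colluders_view W N d U T Tc (x, r)))) (rand_pmf N d U T) =
          map_pmf (\<lambda>r. (server_view W N d U T U1 (x', r),
              (\<lambda>p\<in>{..<d}. \<Sum>i\<in>U1. fst (x', r) i p, colluders_view W N d U T Tc (x', r)))) (rand_pmf N d U T)"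
      using K_lemma[OF TU dv L1 L2 U1 Tc subsetD[OF PX x] subsetD[OF PX x'] sx cx] by (simp only: fst_conv)
  qed
qed


theorem theorem1:
  fixes W :: "'a::{field,finite} mat" and N T D U d :: nat
  assumes "N \<ge> 1"
    and "T + D < N"
    and "T < U" and "U \<le> N - D"
    and "(U - T) dvd d"
    and "T_private_MDS W U N T"
  shows "lightsecagg_private W N d U T \<and> lightsecagg_dropout_resilient W N d U T D"
proof
  show "lightsecagg_private W N d U T"
    using privacy[OF assms(3) _ assms(5) assms(6)] assms(2) by simp
  show "lightsecagg_dropout_resilient W N d U T D"
    using dropout[OF assms(3) assms(4) assms(5) assms(6)] .
qed

end
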